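(* Let $S$ be an instance of 3-Partition (with $n_1\ge\cdots\ge n_{3m}$) and let $w_S=\mathrm{Load}_S\,\mathrm{Dist}_S\,\mathrm{Ver}_S$ be the string defined below. Then every accepting computation $\varepsilon\,\|\,w_S\vdash^*\varepsilon\,\|\,\varepsilon$ of the queue automaton begins as $$\varepsilon\,\|\,w_S \vdash^* e_0(b^{2B}e)^m\,\|\,\mathrm{Dist}_S\,\mathrm{Ver}_S,$$ and in the subsequent part of the computation, for each $i=1,\dots,m$, the $i$-th occurrence of the subword $(a_1b^Ba_2)^3$ in $\mathrm{Dist}_S$ is consumed by the $i$-th occurrence of $b^{2B}$ in the queue.
   Context: Queue automaton: a configuration is written $Q\,\|\,x$ ($Q$ = queue contents, $x$ = remaining input); a step from $Q\,\|\,\sigma x$ ($\sigma$ a symbol) goes either to $Q\sigma\,\|\,x$ (push) or, if $Q=\sigma Q'$, to $Q'\,\|\,x$ (match/pop). $\vdash^*$ is zero or more steps; $\varepsilon$ is the empty string; an accepting computation of $w$ is a computation $\varepsilon\,\|\,w\vdash^*\varepsilon\,\|\,\varepsilon$. If a computation passes through $u_1u_2u_3\,\|\,x_1x_2x_3\vdash^* u_2u_3z_1\,\|\,x_2x_3\vdash^* u_3z_1z_2\,\|\,x_3$, then $x_2$ is consumed by $u_2$ (with resultant $z_2$). An instance of 3-Partition is a sequence $S=\langle n_i:1\le i\le 3m\rangle$ of natural numbers such that $B=(\sum_{i=1}^{3m}n_i)/m$ is an integer and $B/4<n_i<B/2$ for all $i$; throughout, the $n_i$ are assumed to be in non-increasing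 order. The alphabet is $\{a_1,a_2,b,e_0,e,c_1,c_2,x,y\}$; $u^i$ denotes $i$ concatenated copies of $u$ and $\prod_{\ell=1}^k u_\ell=u_1u_2\cdots u_k$. Define $U_\ell=a_1^2b^\ell a_2^2$, $v_\ell=c_1x^\ell y^\ell c_2$, $D_k=U_{n_k}^{3m-k+1}$, $E_k=U_B^{3m-k}\,a_1b^{n_k}a_2\,U_B^{3m-k}$, $F_k=U_B^{2(3m-k)}$, and $\mathrm{Load}_S=e_0\prod_{i=1}^m(b^{2B}e)$, $\mathrm{Dist}_S=e_0\prod_{i=1}^m((a_1b^Ba_2)^3e)$, $\mathrm{Ver}_S=\prod_{k=1}^{3m}[v_{4k-3}D_kv_{4k-3}\,v_{4k-2}D_kv_{4k-2}\,v_{4k-1}E_kv_{4k-1}\,v_{4k}F_kv_{4k}]$, and $w_S=\mathrm{Load}_S\mathrm{Dist}_S\mathrm{Ver}_S$. *)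

theory Defs
  imports Main
begin

datatype sym = A1 | A2 | Bs | E0 | Ee | C1 | C2 | Xs | Ys

type_synonym config = "sym list \<times> sym list"  (* (queue contents Q, remaining input x) *)

inductive qstep :: "config \<Rightarrow> config \<Rightarrow> bool" where
  push:  "qstep (Q, \<sigma> # x) (Q @ [\<sigma>], x)"
| match: "qstep (\<sigma> # Q', \<sigma> # x) (Q', x)"

definition is_computation :: "config list \<Rightarrow> bool" where
  "is_computation cs \<longleftrightarrow> cs \<noteq> [] \<and> (\<forall>i. Suc i < length cs \<longrightarrow> qstep (cs ! i) (cs ! Suc i))"

definition accepting_computation :: "sym list \<Rightarrow> config list \<Rightarrow> bool" where
  "accepting_computation w cs \<longleftrightarrow> is_computation cs \<and> hd cs = ([], w) \<and> last cs = ([], [])"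

definition consumed_by :: "config list \<Rightarrow> sym list \<Rightarrow> sym list \<Rightarrow> sym list
    \<Rightarrow> sym list \<Rightarrow> sym list \<Rightarrow> sym list \<Rightarrow> bool" where
  "consumed_by cs u1 u2 u3 x1 x2 x3 \<longleftrightarrow>
     (\<exists>i j k z1 z2. i \<le> j \<and> j \<le> k \<and> k < length cs \<and>
        cs ! i = (u1 @ u2 @ u3, x1 @ x2 @ x3) \<and>
        cs ! j = (u2 @ u3 @ z1, x2 @ x3) \<and>
        cs ! k = (u3 @ z1 @ z2, x3))"

definition pw :: "sym list \<Rightarrow> nat \<Rightarrow> sym list" where
  "pw u i = concat (replicate i u)"

definition three_partition_instance :: "(nat \<Rightarrow> nat) \<Rightarrow> nat \<Rightarrow> nat \<Rightarrow> bool" where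
  "three_partition_instance n m B \<longleftrightarrow> 0 < m \<and>
     (\<Sum>i=1..3*m. n i) = m * B \<and>
     (\<forall>i\<in>{1..3*m}. B < 4 * n i \<and> 2 * n i < B) \<and>
     (\<forall>i j. 1 \<le> i \<longrightarrow> i \<le> j \<longrightarrow> j \<le> 3*m \<longrightarrow> n j \<le> n i)"

definition U :: "nat \<Rightarrow> sym list" where
  "U l = [A1, A1] @ replicate l Bs @ [A2, A2]"

definition vv :: "nat \<Rightarrow> sym list" where
  "vv l = [C1] @ replicate l Xs @ replicate l Ys @ [C2]"

definition DD :: "(nat \<Rightarrow> nat) \<Rightarrow> nat \<Rightarrow> nat \<Rightarrow> sym list" where
  "DD n m k = pw (U (n k)) (3*m - k + 1)"

definition EE :: "(nat \<Rightarrow> nat) \<Rightarrow> nat \<Rightarrow> nat \<Rightarrow> nat \<Rightarrow> sym list" where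
  "EE n m B k = pw (U B) (3*m - k) @ [A1] @ replicate (n k) Bs @ [A2] @ pw (U B) (3*m - k)"

definition FF :: "nat \<Rightarrow> nat \<Rightarrow> nat \<Rightarrow> sym list" where
  "FF m B k = pw (U B) (2 * (3*m - k))"

definition Load :: "nat \<Rightarrow> nat \<Rightarrow> sym list" where
  "Load m B = E0 # pw (replicate (2*B) Bs @ [Ee]) m"

definition triple :: "nat \<Rightarrow> sym list" where
  "triple B = pw ([A1] @ replicate B Bs @ [A2]) 3"

definition Dist :: "nat \<Rightarrow> nat \<Rightarrow> sym list" where
  "Dist m B = E0 # pw (triple B @ [Ee]) m"

definition Ver :: "(nat \<Rightarrow> nat) \<Rightarrow> nat \<Rightarrow> nat \<Rightarrow> sym list" where
  "Ver n m B = concat (map (\<lambda>k.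
       vv (4*k-3) @ DD n m k @ vv (4*k-3) @
       vv (4*k-2) @ DD n m k @ vv (4*k-2) @
       vv (4*k-1) @ EE n m B k @ vv (4*k-1) @
       vv (4*k) @ FF m B k @ vv (4*k)) [1..<3*m+1])"

definition wS :: "(nat \<Rightarrow> nat) \<Rightarrow> nat \<Rightarrow> nat \<Rightarrow> sym list" where
  "wS n m B = Load m B @ Dist m B @ Ver n m B"

end

theory Submission
  imports Defs
begin

lemma pw_add: "pw u (a+b) = pw u a @ pw u b"
  by (simp add: pw_def replicate_add)
lemma pw_Suc: "pw u (Suc a) = u @ pw u a"
  by (simp add: pw_def)
lemma len_pw: "length (pw u a) = a * length u"
  by (induction a) (auto simp: pw_Suc, simp add: pw_def)
lemma set_pw: "set (pw u a) \<subseteq> set u"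
  by (auto simp: pw_def)
lemma count_pw: "count_list (pw u a) x = a * count_list u x"
  by (induction a) (auto simp: pw_Suc, simp add: pw_def)

lemma set_Ver: "set (Ver n m B) \<subseteq> {A1,A2,Bs,C1,C2,Xs,Ys}"
proof -
  have U: "set (pw (U l) k) \<subseteq> {A1,A2,Bs,C1,C2,Xs,Ys}" for l k
    using set_pw[of "U l" k] by (auto simp: U_def)
  have v: "set (vv l) \<subseteq> {A1,A2,Bs,C1,C2,Xs,Ys}" for l
    by (auto simp: vv_def)
  have "set (vv (4*k-3) @ DD n m k @ vv (4*k-3) @
       vv (4*k-2) @ DD n m k @ vv (4*k-2) @
       vv (4*k-1) @ EE n m B k @ vv (4*k-1) @
       vv (4*k) @ FF m B k @ vv (4*k)) \<subseteq> {A1,A2,Bs,C1,C2,Xs,Ys}" for k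
    unfolding DD_def EE_def FF_def set_append using U v by auto
  then show ?thesis
    unfolding Ver_def set_concat set_map by blast
qed

lemma set_triple: "set (triple B) \<subseteq> {A1,A2,Bs}"
  using set_pw[of "[A1] @ replicate B Bs @ [A2]" 3] by (auto simp: triple_def)

lemma qstep_cases: "qstep (Q,x) (Q',x') \<Longrightarrow> x \<noteq> [] \<and> x' = tl x \<and> (Q' = Q @ [hd x] \<or> Q = hd x # Q')"
  by (cases rule: qstep.cases) auto

context
  fixes cs w
  assumes comp: "is_computation cs" and hdc: "hd cs = ([],w)" and lst: "last cs = ([],[])"
begin

lemma c_snd: "t < length cs \<Longrightarrow> snd (cs!t) = drop t w"
proof (induction t)
  case 0
  then show ?case using hdc comp by (simp add: is_computation_def hd_conv_nth)
next
  case (Suc t)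
  then have "qstep (cs!t) (cs!Suc t)" using comp by (simp add: is_computation_def)
  then have "snd (cs!Suc t) = tl (snd (cs!t))"
    using qstep_cases[of "fst (cs!t)" "snd (cs!t)" "fst (cs!Suc t)" "snd (cs!Suc t)"] by simp
  then show ?case using Suc by (simp add: drop_Suc tl_drop)
qed

lemma c_len: "length w < length cs"
proof -
  have ne: "cs \<noteq> []" using comp by (simp add: is_computation_def)
  have "snd (cs ! (length cs - 1)) = []" using lst ne by (simp add: last_conv_nth)
  then have "drop (length cs - 1) w = []" using c_snd ne by simp
  then show ?thesis using ne by (cases cs) auto
qed

lemma c_step: "t < length w \<Longrightarrow> fst (cs!Suc t) = fst (cs!t) @ [w!t] \<or> fst (cs!t) = w!t # fst (cs!Suc t)"
proof -
  assume t: "t < length w"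
  then have "qstep (cs!t) (cs!Suc t)" using comp c_len by (simp add: is_computation_def)
  then have q: "qstep (fst (cs!t), snd (cs!t)) (fst (cs!Suc t), snd (cs!Suc t))" by simp
  have "snd (cs!t) = drop t w" using c_snd c_len t by simp
  then have "hd (snd (cs!t)) = w!t" using t by (simp add: hd_drop_conv_nth)
  then show ?thesis
    using qstep_cases[OF q] by metis
qed

lemma c_count: "t < length cs \<Longrightarrow> count_list (fst (cs!t)) x \<le> count_list (snd (cs!t)) x"
proof -
  assume t: "t < length cs"
  then have "t \<le> length cs - 1" by simp
  then show ?thesis
  proof (induction rule: inc_induct)
    case base
    have ne: "cs \<noteq> []" using comp by (simp add: is_computation_def)
    then show ?case using lst by (simp add: last_conv_nth)
  next
    case (step k)
    then have "qstep (cs!k) (cs!Suc k)" using comp by (simp add: is_computation_def)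
    then have q: "qstep (fst (cs!k), snd (cs!k)) (fst (cs!Suc k), snd (cs!Suc k))" by simp
    obtain a r where r: "snd (cs!k) = a # r" and r2: "snd (cs!Suc k) = r"
      using qstep_cases[OF q] by (cases "snd (cs!k)") auto
    from qstep_cases[OF q] r
    have "fst (cs!Suc k) = fst (cs!k) @ [a] \<or> fst (cs!k) = a # fst (cs!Suc k)" by simp
    then show ?case using step.IH r r2 by auto
  qed
qed


lemma nth_w: "drop t w = s @ r \<Longrightarrow> d < length s \<Longrightarrow> w!(t+d) = s!d"
proof -
  assume a: "drop t w = s @ r" "d < length s"
  then have "t \<le> length w" by (cases "t \<le> length w") auto
  then have "w!(t+d) = (drop t w)!d" by (simp add: nth_drop)
  then show ?thesis using a by (simp add: nth_append)
qed

lemma phase: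
  assumes dw: "drop t w = s @ Ee # rest" and noE: "Ee \<notin> set s"
    and Qt: "fst (cs!t) = replicate N Bs @ Ee # R @ z" and zE: "Ee \<notin> set z"
    and cnt: "count_list rest Ee < count_list R Ee + 2"
  shows "\<exists>y. Ee \<notin> set y \<and> fst (cs!(t + length s)) = Ee # R @ z @ y
             \<and> fst (cs!Suc (t + length s)) = R @ z @ y"
proof -
  have "length (drop t w) = length s + Suc (length rest)" using dw by simp
  then have tl: "t + length s < length w" by simp
  have inv: "d \<le> length s \<Longrightarrow> \<exists>k y. k \<le> N \<and> Ee \<notin> set y \<and>
     fst (cs!(t+d)) = replicate (N-k) Bs @ Ee # R @ z @ y" for d
  proof (induction d)
    case 0 show ?case using Qt by (intro exI[of _ 0] exI[of _ "[]"]) simp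
  next
    case (Suc d)
    then obtain k y where k: "k \<le> N" and y: "Ee \<notin> set y"
      and Q: "fst (cs!(t+d)) = replicate (N-k) Bs @ Ee # R @ z @ y" by auto
    have wd: "w!(t+d) = s!d" using nth_w[OF dw] Suc.prems by simp
    have sd: "s!d \<noteq> Ee" using noE Suc.prems nth_mem by (metis Suc_le_lessD)
    have "t+d < length w" using tl Suc.prems by simp
    from c_step[OF this] show ?case
    proof
      assume "fst (cs!Suc (t+d)) = fst (cs!(t+d)) @ [w!(t+d)]"
      then show ?thesis using k y Q wd sd by (intro exI[of _ k] exI[of _ "y @ [s!d]"]) simp
    next
      assume h: "fst (cs!(t+d)) = w!(t+d) # fst (cs!Suc (t+d))"
      show ?thesis
      proof (cases "k < N")
        case True
        then have r: "replicate (N-k) Bs = Bs # replicate (N - Suc k) Bs"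
          by (metis Suc_diff_Suc replicate_Suc)
        show ?thesis using h Q r True y by (intro exI[of _ "Suc k"] exI[of _ y]) auto
      next
        case False
        then have "N - k = 0" by simp
        then show ?thesis using h Q wd sd by simp
      qed
    qed
  qed
  obtain k y where k: "k \<le> N" and y: "Ee \<notin> set y"
      and Q: "fst (cs!(t+length s)) = replicate (N-k) Bs @ Ee # R @ z @ y"
    using inv[of "length s"] by auto
  define p where "p = t + length s"
  have "t \<le> length w" using tl by simp
  then have wp: "w!p = Ee" using dw by (metis nth_drop nth_append_length p_def)
  have dp: "drop (Suc p) w = rest" using dw
    by (metis append_eq_conv_conj drop_Suc drop_drop list.sel(3) p_def tl_drop add.commute)
  have pl: "p < length w" using tl p_def by simp
  from c_step[OF pl] show ?thesis
  proof
    assume h: "fst (cs!Suc p) = fst (cs!p) @ [w!p]"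
    have "Suc p < length cs" using pl c_len by simp
    then have "count_list (fst (cs!Suc p)) Ee \<le> count_list (snd (cs!Suc p)) Ee" by (rule c_count)
    moreover have "snd (cs!Suc p) = rest" using c_snd \<open>Suc p < length cs\<close> dp by simp
    moreover have "count_list (fst (cs!Suc p)) Ee = count_list R Ee + 2"
      using h Q wp y zE p_def by simp
    ultimately show ?thesis using cnt by simp
  next
    assume h: "fst (cs!p) = w!p # fst (cs!Suc p)"
    have "N - k = 0"
    proof (rule ccontr)
      assume "N - k \<noteq> 0"
      then have "replicate (N-k) Bs = Bs # replicate (N-k-1) Bs"
        by (metis Suc_pred' replicate_Suc zero_less_iff_neq_zero)
      then show False using h Q wp p_def by simp
    qed
    then show ?thesis using h Q wp y p_def by (intro exI[of _ y]) simp
  qed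
qed


lemma part1:
  assumes w: "w = wS n m B"
  shows "fst (cs ! length (Load m B)) = Load m B"
    and "fst (cs ! Suc (length (Load m B))) = pw (replicate (2*B) Bs @ [Ee]) m"
proof -
  define blk where "blk = replicate (2*B) Bs @ [Ee]"
  define Ld where "Ld = Load m B"
  define L where "L = length Ld"
  have Ld: "Ld = E0 # pw blk m" by (simp add: Ld_def Load_def blk_def)
  have wL: "w = Ld @ (E0 # pw (triple B @ [Ee]) m @ Ver n m B)"
    by (simp add: w wS_def Ld_def Dist_def)
  have E0b: "E0 \<notin> set (pw blk m)" using set_pw[of blk m] by (auto simp: blk_def)
  have pre: "t \<le> L \<Longrightarrow> fst (cs!t) = take t Ld" for t
  proof (induction t)
    case 0
    have "cs \<noteq> []" using comp by (simp add: is_computation_def)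
    then show ?case using hdc by (simp add: hd_conv_nth[symmetric])
  next
    case (Suc t)
    then have tL: "t < L" by simp
    then have tw: "t < length w" using wL L_def by simp
    have wt: "w!t = Ld!t" using wL tL L_def by (simp add: nth_append)
    from c_step[OF tw] show ?case
    proof
      assume "fst (cs!Suc t) = fst (cs!t) @ [w!t]"
      then show ?thesis using Suc tL wt L_def by (simp add: take_Suc_conv_app_nth)
    next
      assume h: "fst (cs!t) = w!t # fst (cs!Suc t)"
      then have "take t Ld \<noteq> []" using Suc by simp
      then have t0: "t > 0" by (cases t) auto
      then have "hd (take t Ld) = E0" using Ld by (cases t) auto
      then have "w!t = E0" using h Suc by simp
      moreover have "Ld!t \<in> set (pw blk m)"
      proof -
        have "Ld!t = (pw blk m)!(t-1)" using Ld t0 by (simp add: nth_Cons')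
        moreover have "t - 1 < length (pw blk m)" using tL L_def Ld t0 by simp
        ultimately show ?thesis by simp
      qed
      ultimately show ?thesis using wt E0b by simp
    qed
  qed
  have QL: "fst (cs!L) = Ld" using pre[of L] L_def by simp
  then show "fst (cs ! length (Load m B)) = Load m B" using L_def Ld_def by simp
  have Lw: "L < length w" using wL L_def by simp
  have wLE: "w!L = E0" using wL L_def by (simp add: nth_append)
  from c_step[OF Lw] have "fst (cs!Suc L) = pw blk m"
  proof
    assume h: "fst (cs!Suc L) = fst (cs!L) @ [w!L]"
    have sl: "Suc L < length cs" using Lw c_len by simp
    then have "count_list (fst (cs!Suc L)) E0 \<le> count_list (snd (cs!Suc L)) E0" by (rule c_count)
    moreover have "snd (cs!Suc L) = pw (triple B @ [Ee]) m @ Ver n m B"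
      using c_snd[OF sl] wL L_def by simp
    moreover have "E0 \<notin> set (pw (triple B @ [Ee]) m @ Ver n m B)"
      using set_pw[of "triple B @ [Ee]" m] set_triple[of B] set_Ver[of n m B] by auto
    moreover have "count_list (fst (cs!Suc L)) E0 = 2"
      using h QL wLE Ld E0b by simp
    ultimately show ?thesis by simp
  next
    assume h: "fst (cs!L) = w!L # fst (cs!Suc L)"
    then show ?thesis using QL Ld by simp
  qed
  then show "fst (cs ! Suc (length (Load m B))) = pw (replicate (2*B) Bs @ [Ee]) m"
    using L_def Ld_def blk_def by simp
qed


lemma pw_split: "1 \<le> i \<Longrightarrow> i \<le> m \<Longrightarrow> pw u m = pw u (i-1) @ u @ pw u (m-i)"
proof -
  assume "1 \<le> i" "i \<le> m"
  then have "m = (i-1) + (1 + (m-i))" by simp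
  then have "pw u m = pw u ((i-1) + (1 + (m-i)))" by simp
  also have "\<dots> = pw u (i-1) @ pw u 1 @ pw u (m-i)" by (simp only: pw_add)
  finally show ?thesis by (simp add: pw_def)
qed

lemma part2:
  assumes w: "w = wS n m B"
  shows "\<forall>i\<in>{1..m}.
            consumed_by cs
              (E0 # pw (replicate (2*B) Bs @ [Ee]) (i - 1))
              (replicate (2*B) Bs)
              (Ee # pw (replicate (2*B) Bs @ [Ee]) (m - i))
              (E0 # pw (triple B @ [Ee]) (i - 1))
              (triple B)
              (Ee # pw (triple B @ [Ee]) (m - i) @ Ver n m B)"
proof -
  define blk where "blk = replicate (2*B) Bs @ [Ee]"
  define tb where "tb = triple B @ [Ee]"
  define L where "L = length (Load m B)"
  define T where "T = length (triple B)"
  define p where "p j = Suc L + j * Suc T" for j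
  have wL: "w = Load m B @ (E0 # pw tb m @ Ver n m B)"
    by (simp add: w wS_def Dist_def tb_def)
  have VE: "Ee \<notin> set (Ver n m B)" using set_Ver[of n m B] by auto
  have tE: "Ee \<notin> set (triple B)" using set_triple[of B] by auto
  have cblk: "count_list (pw blk k) Ee = k" for k by (simp add: count_pw blk_def)
  have ctb: "count_list (pw tb k) Ee = k" for k using tE by (simp add: count_pw tb_def)
  have ltb: "length tb = Suc T" by (simp add: tb_def T_def)
  have dp: "j \<le> m \<Longrightarrow> drop (p j) w = pw tb (m-j) @ Ver n m B" for j
  proof -
    assume j: "j \<le> m"
    have d1: "drop (Suc L) w = pw tb m @ Ver n m B" using wL L_def by simp
    have "pw tb m = pw tb j @ pw tb (m-j)" using j pw_add[of tb j "m-j"] by simp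
    moreover have "length (pw tb j) = j * Suc T" using len_pw ltb by simp
    ultimately show ?thesis using d1 p_def
      by (metis add.commute append.assoc append_eq_conv_conj drop_drop)
  qed
  have Q0: "fst (cs ! Suc L) = pw blk m" using part1(2)[OF w] L_def blk_def by simp
  have ms: "j < m \<Longrightarrow> pw u (m-j) = u @ pw u (m - Suc j)" for u j
    by (metis Suc_diff_Suc pw_Suc)
  have step: "j < m \<Longrightarrow> Ee \<notin> set z \<Longrightarrow> fst (cs ! p j) = pw blk (m-j) @ z \<Longrightarrow>
     \<exists>y. Ee \<notin> set y \<and> fst (cs!(p j + T)) = Ee # pw blk (m - Suc j) @ z @ y
             \<and> fst (cs!Suc (p j + T)) = pw blk (m - Suc j) @ z @ y" for j z
  proof -
    assume j: "j < m" and z: "Ee \<notin> set z" and Q: "fst (cs ! p j) = pw blk (m-j) @ z"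
    have d: "drop (p j) w = triple B @ Ee # (pw tb (m - Suc j) @ Ver n m B)"
      using dp[of j] j ms[of j tb] by (simp add: tb_def)
    have Q': "fst (cs ! p j) = replicate (2*B) Bs @ Ee # pw blk (m - Suc j) @ z"
      using Q j ms[of j blk] by (simp add: blk_def)
    have c: "count_list (pw tb (m - Suc j) @ Ver n m B) Ee < count_list (pw blk (m - Suc j)) Ee + 2"
      using ctb cblk VE by simp
    show ?thesis using phase[OF d tE Q' z c] T_def by simp
  qed
  have inv: "j \<le> m \<Longrightarrow> \<exists>z. Ee \<notin> set z \<and> fst (cs ! p j) = pw blk (m-j) @ z" for j
  proof (induction j)
    case 0 then show ?case using Q0 p_def by simp
  next
    case (Suc j)
    then obtain z where z: "Ee \<notin> set z" "fst (cs ! p j) = pw blk (m-j) @ z" by auto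
    obtain y where "Ee \<notin> set y" "fst (cs!Suc (p j + T)) = pw blk (m - Suc j) @ z @ y"
      using step[of j z] Suc.prems z by auto
    moreover have "p (Suc j) = Suc (p j + T)" by (simp add: p_def)
    ultimately show ?case using z by (intro exI[of _ "z @ y"]) simp
  qed
  show ?thesis
  proof
    fix i assume i: "i \<in> {1..m}"
    define j where "j = i - 1"
    have jm: "j < m" and ij: "m - Suc j = m - i" using i j_def by auto
    obtain z where z: "Ee \<notin> set z" "fst (cs ! p j) = pw blk (m-j) @ z" using inv[of j] jm by auto
    obtain y where y: "fst (cs!(p j + T)) = Ee # pw blk (m - Suc j) @ z @ y"
      using step[of j z] jm z by auto
    have lw: "length w < length cs" by (rule c_len)
    have dj: "drop (p j) w = triple B @ Ee # pw tb (m - i) @ Ver n m B"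
      using dp[of j] jm ms[of j tb] ij by (simp add: tb_def)
    have pT: "p j + T < length w"
    proof -
      have "length (drop (p j) w) > T" using dj T_def by simp
      then show ?thesis by simp
    qed
    have djT: "drop (p j + T) w = Ee # pw tb (m - i) @ Ver n m B"
      using dj T_def by (metis add.commute append_eq_conv_conj drop_drop)
    have c1: "cs ! L = (E0 # pw blk (i - 1) @ replicate (2*B) Bs @ Ee # pw blk (m - i),
                      E0 # pw tb (i - 1) @ triple B @ Ee # pw tb (m - i) @ Ver n m B)"
    proof -
      have "fst (cs!L) = Load m B" using part1(1)[OF w] L_def by simp
      moreover have "Load m B = E0 # pw blk (i - 1) @ replicate (2*B) Bs @ Ee # pw blk (m - i)"
        using pw_split[of i m blk] i by (simp add: Load_def blk_def)
      moreover have "snd (cs!L) = drop L w" using c_snd lw wL L_def by simp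
      moreover have "drop L w = E0 # pw tb (i - 1) @ triple B @ Ee # pw tb (m - i) @ Ver n m B"
        using wL L_def pw_split[of i m tb] i by (simp add: tb_def)
      ultimately show ?thesis by (simp add: prod_eq_iff)
    qed
    have c2: "cs ! p j = (replicate (2*B) Bs @ (Ee # pw blk (m - i)) @ z,
                      triple B @ Ee # pw tb (m - i) @ Ver n m B)"
    proof -
      have "fst (cs ! p j) = replicate (2*B) Bs @ (Ee # pw blk (m - i)) @ z"
        using z(2) ms[of j blk] jm ij by (simp add: blk_def)
      moreover have "snd (cs ! p j) = drop (p j) w" using c_snd lw pT by simp
      ultimately show ?thesis using dj by (simp add: prod_eq_iff)
    qed
    have c3: "cs ! (p j + T) = ((Ee # pw blk (m - i)) @ z @ y, Ee # pw tb (m - i) @ Ver n m B)"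
    proof -
      have "snd (cs ! (p j + T)) = drop (p j + T) w" using c_snd lw pT by simp
      then show ?thesis using y ij djT by (simp add: prod_eq_iff)
    qed
    have "L \<le> p j" "p j \<le> p j + T" "p j + T < length cs" using p_def pT lw by auto
    then show "consumed_by cs
              (E0 # pw (replicate (2*B) Bs @ [Ee]) (i - 1))
              (replicate (2*B) Bs)
              (Ee # pw (replicate (2*B) Bs @ [Ee]) (m - i))
              (E0 # pw (triple B @ [Ee]) (i - 1))
              (triple B)
              (Ee # pw (triple B @ [Ee]) (m - i) @ Ver n m B)"
      unfolding consumed_by_def
      using c1 c2 c3 unfolding blk_def tb_def
      by (intro exI[of _ L] exI[of _ "p j"] exI[of _ "p j + T"] exI[of _ z] exI[of _ y]) simp
  qed
qed

end

theorem lemma3: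
  fixes n :: "nat \<Rightarrow> nat" and m B :: nat and cs :: "config list"
  assumes inst: "three_partition_instance n m B"
    and acc: "accepting_computation (wS n m B) cs"
  shows "(\<exists>j < length cs. cs ! j = (Load m B, Dist m B @ Ver n m B)) \<and>
         (\<forall>i\<in>{1..m}.
            consumed_by cs
              (E0 # pw (replicate (2*B) Bs @ [Ee]) (i - 1))
              (replicate (2*B) Bs)
              (Ee # pw (replicate (2*B) Bs @ [Ee]) (m - i))
              (E0 # pw (triple B @ [Ee]) (i - 1))
              (triple B)
              (Ee # pw (triple B @ [Ee]) (m - i) @ Ver n m B))"
proof -
  have comp: "is_computation cs" and h: "hd cs = ([], wS n m B)" and l: "last cs = ([],[])"
    using acc by (auto simp: accepting_computation_def)
  define L where "L = length (Load m B)"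
  have lw: "length (wS n m B) < length cs" using c_len[OF comp h l] .
  have Ll: "L < length cs" using lw L_def by (simp add: wS_def)
  have "fst (cs ! L) = Load m B" using part1(1)[OF comp h l refl] L_def by simp
  moreover have "snd (cs ! L) = Dist m B @ Ver n m B"
    using c_snd[OF comp h l Ll] L_def by (simp add: wS_def)
  ultimately have "cs ! L = (Load m B, Dist m B @ Ver n m B)" by (simp add: prod_eq_iff)
  then show ?thesis using Ll part2[OF comp h l refl] by blast
qed

end
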